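(* Let $Q$ be a finite connected quandle, $A$ an abelian group, $\theta:Q\times Q\to A$ a quandle cocycle, and $E=Q\times_\theta A$. If $\theta$ is not cohomologous to the trivial cocycle (i.e. the cover $E$ of $Q$ is not trivial), then $Q$ has a connected cover of size $p\,|Q|$ for some prime $p$.
   Context: A quandle is a set $Q$ with a binary operation $*$ such that every left translation $L_x:y\mapsto x*y$ is bijective, $x*(y*z)=(x*y)*(x*z)$ and $x*x=x$; $Q$ is connected if $\langle L_x:x\in Q\rangle$ is transitive. A quandle cocycle with values in $A$ is $\theta:Q\times Q\to A$ with $\theta_{x*y,x*z}+\theta_{x,z}=\theta_{x,y*z}+\theta_{y,z}$ and $\theta_{x,x}=0$; $E=Q\times_\theta A$ is $Q\times A$ with $(x,a)*(y,b)=(x*y,\theta_{x,y}+b)$. $\theta$ is cohomologous to the trivial cocycle if there is $\gamma:Q\to\mathrm{Sym}_A$ with $(b\mapsto\theta_{x,y}+b)=\gamma_{x*y}\gamma_y^{-1}$ for all $x,y$ (equivalently, since $Q$ is connected, $\theta_{x,y}=\gamma_{x*y}-\gamma_y$ for some $\gamma:Q\to A$). A cover of $Q$ is a quandle $E'$ with a surjective homomorphism $\pi:E'\to Q$ such that $\pi(u)=\pi(v)$ implies $L_u=L_v$ in $E'$; it is connected if $E'$ is connected, and its size is $|E'|$. *)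

theory Defs
  imports "HOL-Computational_Algebra.Primes"
begin

definition quandle :: "'q set \<Rightarrow> ('q \<Rightarrow> 'q \<Rightarrow> 'q) \<Rightarrow> bool" where
  "quandle Q op \<longleftrightarrow>
     (\<forall>x\<in>Q. bij_betw (op x) Q Q) \<and>
     (\<forall>x\<in>Q. \<forall>y\<in>Q. \<forall>z\<in>Q. op x (op y z) = op (op x y) (op x z)) \<and>
     (\<forall>x\<in>Q. op x x = x)"

text \<open>Connected: the group generated by the left translations acts transitively.
  The orbit of a point under this group is its class under the equivalence
  closure of the relation y ~ x * y (x, y in Q).\<close>
definition quandle_connected :: "'q set \<Rightarrow> ('q \<Rightarrow> 'q \<Rightarrow> 'q) \<Rightarrow> bool" where
  "quandle_connected Q op \<longleftrightarrow>
     (let R = {(y, op x y) | x y. x \<in> Q \<and> y \<in> Q}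
      in \<forall>a\<in>Q. \<forall>b\<in>Q. (a, b) \<in> (R \<union> R\<inverse>)\<^sup>*)"

definition quandle_cocycle :: "'q set \<Rightarrow> ('q \<Rightarrow> 'q \<Rightarrow> 'q) \<Rightarrow> ('q \<Rightarrow> 'q \<Rightarrow> 'a::ab_group_add) \<Rightarrow> bool" where
  "quandle_cocycle Q op \<theta> \<longleftrightarrow>
     (\<forall>x\<in>Q. \<forall>y\<in>Q. \<forall>z\<in>Q.
        \<theta> (op x y) (op x z) + \<theta> x z = \<theta> x (op y z) + \<theta> y z) \<and>
     (\<forall>x\<in>Q. \<theta> x x = 0)"

definition cohomologous_trivial :: "'q set \<Rightarrow> ('q \<Rightarrow> 'q \<Rightarrow> 'q) \<Rightarrow> ('q \<Rightarrow> 'q \<Rightarrow> 'a::ab_group_add) \<Rightarrow> bool" where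
  "cohomologous_trivial Q op \<theta> \<longleftrightarrow>
     (\<exists>\<gamma> :: 'q \<Rightarrow> 'a \<Rightarrow> 'a. (\<forall>x\<in>Q. bij (\<gamma> x)) \<and>
        (\<forall>x\<in>Q. \<forall>y\<in>Q. (\<lambda>b. \<theta> x y + b) = \<gamma> (op x y) \<circ> inv (\<gamma> y)))"

definition quandle_cover :: "'e set \<Rightarrow> ('e \<Rightarrow> 'e \<Rightarrow> 'e) \<Rightarrow> 'q set \<Rightarrow> ('q \<Rightarrow> 'q \<Rightarrow> 'q) \<Rightarrow> ('e \<Rightarrow> 'q) \<Rightarrow> bool" where
  "quandle_cover E opE Q op \<pi> \<longleftrightarrow>
     quandle E opE \<and>
     \<pi> ` E = Q \<and>
     (\<forall>u\<in>E. \<forall>v\<in>E. \<pi> (opE u v) = op (\<pi> u) (\<pi> v)) \<and>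
     (\<forall>u\<in>E. \<forall>v\<in>E. \<pi> u = \<pi> v \<longrightarrow> (\<forall>w\<in>E. opE u w = opE v w))"

end

theory Submission
  imports Defs
begin


fun nmul :: "nat \<Rightarrow> 'a::ab_group_add \<Rightarrow> 'a" where
  "nmul 0 h = 0" | "nmul (Suc n) h = h + nmul n h"

lemma nmul_add: "nmul (m + n) h = nmul m h + nmul n h"
  by (induct m) (auto simp: algebra_simps)

lemma nmul_diff: "nmul n (x - y) = nmul n x - nmul n y"
  by (induct n) (auto simp: algebra_simps)

lemma nmul_mult: "nmul (m * n) h = nmul m (nmul n h)"
  by (induct m) (auto simp: nmul_add nmul_diff)

definition zmul :: "int \<Rightarrow> 'a::ab_group_add \<Rightarrow> 'a" where
  "zmul i h = (if 0 \<le> i then nmul (nat i) h else - nmul (nat (-i)) h)"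

lemma zmul_diff_nat: "zmul (int m - int n) h = nmul m h - nmul n h"
proof (cases "n \<le> m")
  case True
  then obtain k where "m = n + k" using le_Suc_ex by blast
  then show ?thesis by (simp add: zmul_def nmul_add)
next
  case False
  then have "m < n" by simp
  then obtain k where "n = Suc (m + k)" using less_imp_Suc_add by blast
  then have k: "n = m + Suc k" by simp
  have e: "int m - int n = - int (Suc k)" using k by simp
  have z: "zmul (- int (Suc k)) h = - nmul (Suc k) h" by (simp add: zmul_def nat_int_add del: nmul.simps of_nat_Suc)
  have nn: "nmul n h = nmul m h + nmul (Suc k) h" unfolding k by (rule nmul_add)
  have "zmul (int m - int n) h = - nmul (Suc k) h" unfolding e by (rule z)
  then show ?thesis unfolding nn by (simp add: algebra_simps del: nmul.simps)
qed

lemma int_as_diff: obtains m n where "i = int m - int n"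
  by (rule int_diff_cases)

lemma zmul_add: "zmul (i + j) h = zmul i h + zmul j h"
proof -
  obtain m1 n1 where 1: "i = int m1 - int n1" by (rule int_as_diff)
  obtain m2 n2 where 2: "j = int m2 - int n2" by (rule int_as_diff)
  have "i + j = int (m1 + m2) - int (n1 + n2)" using 1 2 by simp
  then show ?thesis using 1 2 by (simp only: zmul_diff_nat nmul_add) (simp add: algebra_simps)
qed

lemma zmul_mult: "zmul (i * j) h = zmul i (zmul j h)"
proof -
  obtain m1 n1 where 1: "i = int m1 - int n1" by (rule int_as_diff)
  obtain m2 n2 where 2: "j = int m2 - int n2" by (rule int_as_diff)
  have "i * j = int (m1 * m2 + n1 * n2) - int (m1 * n2 + n1 * m2)" unfolding 1 2 by (simp add: algebra_simps)
  then show ?thesis using 1 2 by (simp only: zmul_diff_nat nmul_add nmul_mult nmul_diff) (simp add: algebra_simps)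
qed

lemma zmul_0[simp]: "zmul 0 h = 0" by (simp add: zmul_def)
lemma zmul_1[simp]: "zmul 1 h = h" by (simp add: zmul_def)
lemma zmul_neg: "zmul (- i) h = - zmul i h"
  using zmul_add[of i "-i" h] by (simp add: eq_neg_iff_add_eq_0 add.commute)

definition sg :: "'a::ab_group_add set \<Rightarrow> bool" where
  "sg S \<longleftrightarrow> 0 \<in> S \<and> (\<forall>x\<in>S. \<forall>y\<in>S. x + y \<in> S) \<and> (\<forall>x\<in>S. - x \<in> S)"

lemma sg_diff: "sg S \<Longrightarrow> x \<in> S \<Longrightarrow> y \<in> S \<Longrightarrow> x - y \<in> S"
  unfolding sg_def by (metis diff_conv_add_uminus)

lemma sg_nmul: "sg S \<Longrightarrow> h \<in> S \<Longrightarrow> nmul n h \<in> S"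
  by (induct n) (auto simp: sg_def)

lemma sg_zmul: "sg S \<Longrightarrow> h \<in> S \<Longrightarrow> zmul i h \<in> S"
  by (auto simp: zmul_def sg_nmul) (meson sg_def sg_nmul)

lemma exists_Zp_quotient:
  fixes H T :: "'a::ab_group_add set"
  assumes sgH: "sg H" and fin: "finite T" and TH: "T \<subseteq> H"
    and gen: "\<And>S. sg S \<Longrightarrow> T \<subseteq> S \<Longrightarrow> H \<subseteq> S" and nz: "H \<noteq> {0}"
  shows "\<exists>p (\<phi>::'a \<Rightarrow> nat). prime p \<and> \<phi> 0 = 0 \<and> (\<forall>x\<in>H. \<phi> x < p) \<and>
           (\<forall>x\<in>H. \<forall>y\<in>H. \<phi> (x + y) = (\<phi> x + \<phi> y) mod p) \<and> (\<forall>j<p. \<exists>x\<in>H. \<phi> x = j)"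
proof -
  have sg0: "sg {0::'a}" by (simp add: sg_def)
  have T0: "\<not> T \<subseteq> {0}"
  proof
    assume "T \<subseteq> {0}"
    then have "H \<subseteq> {0}" using gen sg0 by blast
    then show False using nz sgH by (auto simp: sg_def)
  qed
  define F where "F = {K. K \<subseteq> H \<and> (\<forall>x\<in>K. \<forall>y\<in>K. x+y \<in> K) \<and> (\<forall>x\<in>K. -x\<in>K) \<and> \<not> T \<subseteq> K}"
  have "\<forall>C\<in>chains F. \<Union>C \<in> F"
  proof
    fix C assume C: "C \<in> chains F"
    then have CF: "C \<subseteq> F" and ch: "\<forall>A\<in>C. \<forall>B\<in>C. A \<subseteq> B \<or> B \<subseteq> A"
      by (auto simp: chains_def chain_subset_def)
    have "\<Union>C \<subseteq> H" using CF by (auto simp: F_def)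
    moreover have "\<forall>x\<in>\<Union>C. \<forall>y\<in>\<Union>C. x+y \<in> \<Union>C"
    proof (intro ballI)
      fix x y assume "x \<in> \<Union>C" "y \<in> \<Union>C"
      then obtain A B where AB: "A \<in> C" "B \<in> C" "x \<in> A" "y \<in> B" by auto
      then have "A \<subseteq> B \<or> B \<subseteq> A" using ch by blast
      then show "x + y \<in> \<Union>C" using AB CF unfolding F_def by blast
    qed
    moreover have "\<forall>x\<in>\<Union>C. -x \<in> \<Union>C" using CF unfolding F_def by blast
    moreover have "\<not> T \<subseteq> \<Union>C"
    proof
      assume TC: "T \<subseteq> \<Union>C"
      show False
      proof (cases "C = {}")
        case True then show False using TC T0 by auto
      next
        case False
        have "subset.chain F C" using C by (simp add: chains_alt_def)
        then obtain B where "B \<in> C" "T \<subseteq> B"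
          using finite_subset_Union_chain[OF fin TC False] by blast
        then show False using CF by (auto simp: F_def)
      qed
    qed
    ultimately show "\<Union>C \<in> F" by (simp add: F_def)
  qed
  then obtain M where MF: "M \<in> F" and Mmax: "\<forall>X\<in>F. M \<subseteq> X \<longrightarrow> X = M"
    using Zorn_Lemma by blast
  have MH: "M \<subseteq> H" and Madd: "\<forall>x\<in>M. \<forall>y\<in>M. x+y \<in> M" and Mneg: "\<forall>x\<in>M. -x\<in>M" and TM: "\<not> T \<subseteq> M"
    using MF by (auto simp: F_def)
  have "M \<noteq> {}"
  proof
    assume "M = {}"
    moreover have "{0} \<in> F" using T0 sgH by (auto simp: F_def sg_def)
    ultimately show False using Mmax by auto
  qed
  then obtain x0 where "x0 \<in> M" by blast
  then have "x0 + - x0 \<in> M" using Madd Mneg by blast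
  then have "0 \<in> M" by simp
  then have sgM: "sg M" using Madd Mneg unfolding sg_def by blast
  have key: "N = M \<or> H \<subseteq> N" if "sg N" "M \<subseteq> N" "N \<subseteq> H" for N
  proof (cases "T \<subseteq> N")
    case True then show ?thesis using gen that by blast
  next
    case False
    then have "N \<in> F" using that by (auto simp: F_def sg_def)
    then show ?thesis using Mmax that by blast
  qed
  obtain h where hT: "h \<in> T" and hM: "h \<notin> M" using TM by blast
  have hH: "h \<in> H" using hT TH by blast
  define N where "N k = {m + zmul (k*i) h | m i. m \<in> M}" for k
  have sgN: "sg (N k)" for k
  proof -
    have "0 \<in> N k" unfolding N_def using sgM by (auto simp: sg_def intro!: exI[of _ 0])
    moreover have "x + y \<in> N k" if xN: "x \<in> N k" and yN: "y \<in> N k" for x y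
    proof -
      obtain m i where 1: "x = m + zmul (k*i) h" "m \<in> M" using xN unfolding N_def by blast
      obtain m' i' where 2: "y = m' + zmul (k*i') h" "m' \<in> M" using yN unfolding N_def by blast
      have "x + y = (m + m') + zmul (k*(i+i')) h" using 1 2 by (simp add: distrib_left zmul_add algebra_simps)
      moreover have "m + m' \<in> M" using 1 2 Madd by blast
      ultimately show ?thesis unfolding N_def by blast
    qed
    moreover have "- x \<in> N k" if xN: "x \<in> N k" for x
    proof -
      obtain m i where 1: "x = m + zmul (k*i) h" "m \<in> M" using xN unfolding N_def by blast
      have "- x = (- m) + zmul (k*(-i)) h" using 1 by (simp add: zmul_neg)
      moreover have "- m \<in> M" using 1 Mneg by blast
      ultimately show ?thesis unfolding N_def by blast
    qed
    ultimately show ?thesis by (simp add: sg_def)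
  qed
  have MN: "M \<subseteq> N k" for k
  proof
    fix m assume "m \<in> M"
    moreover have "m = m + zmul (k*0) h" by simp
    ultimately show "m \<in> N k" unfolding N_def by blast
  qed
  have NH: "N k \<subseteq> H" for k
  proof
    fix x assume "x \<in> N k"
    then obtain m i where 1: "x = m + zmul (k*i) h" "m \<in> M" unfolding N_def by blast
    have "zmul (k*i) h \<in> H" using sgH hH by (rule sg_zmul)
    moreover have "m \<in> H" using 1 MH by blast
    ultimately show "x \<in> H" using 1 sgH unfolding sg_def by blast
  qed
  have kN: "zmul k h \<in> N k" for k
  proof -
    have "zmul k h = 0 + zmul (k*1) h" by simp
    moreover have "(0::'a) \<in> M" using sgM by (simp add: sg_def)
    ultimately show ?thesis unfolding N_def by blast
  qed
  define I where "I = {i. zmul i h \<in> M}"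
  have Imul: "k * i \<in> I" if "i \<in> I" for i k
    using that sgM sg_zmul by (auto simp: I_def zmul_mult)
  have Iadd: "i + j \<in> I" if "i \<in> I" "j \<in> I" for i j
    using that Madd by (auto simp: I_def zmul_add)
  have Ncase: "\<exists>i. 1 - k*i \<in> I" if "k \<notin> I" for k
  proof -
    have "N k \<noteq> M" using kN that by (auto simp: I_def)
    then have "h \<in> N k" using key[OF sgN MN NH] hH by blast
    then obtain m i where 1: "h = m + zmul (k*i) h" "m \<in> M" by (auto simp: N_def)
    have "zmul (1 - k*i) h = h - zmul (k*i) h"
      using zmul_add[of 1 "-(k*i)" h] by (simp add: zmul_neg)
    also have "\<dots> = m" using 1 by (simp add: algebra_simps)
    finally show ?thesis using 1 by (auto simp: I_def)
  qed
  have "\<exists>i\<in>I. i \<noteq> 0"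
  proof (cases "2 \<in> I")
    case True then show ?thesis by (intro bexI[of _ 2]) auto
  next
    case False
    then obtain i where "1 - 2*i \<in> I" using Ncase by blast
    moreover have "1 - 2*i \<noteq> 0" by presburger
    ultimately show ?thesis by blast
  qed
  then obtain i where iI: "i \<in> I" "i \<noteq> 0" by blast
  have "\<exists>n::nat. n > 0 \<and> int n \<in> I"
  proof (cases "i > 0")
    case True then show ?thesis using iI by (auto intro!: exI[of _ "nat i"])
  next
    case False
    then have "(-1) * i \<in> I" "(-1)*i > 0" using iI Imul[of i "-1"] by auto
    then show ?thesis by (auto intro!: exI[of _ "nat (-i)"])
  qed
  define p where "p = (LEAST n::nat. n > 0 \<and> int n \<in> I)"
  have pI: "p > 0 \<and> int p \<in> I" unfolding p_def using \<open>\<exists>n::nat. n > 0 \<and> int n \<in> I\<close> by (rule LeastI_ex)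
  have pmin: "p \<le> n" if "n > 0" "int n \<in> I" for n unfolding p_def using that by (simp add: Least_le)
  have Idvd: "int p dvd i" if "i \<in> I" for i
  proof -
    have "i mod int p = i + (- (i div int p)) * int p" by (simp add: minus_div_mult_eq_mod[symmetric])
    moreover have "(- (i div int p)) * int p \<in> I" using Imul pI by blast
    then have "i + (- (i div int p)) * int p \<in> I" using Iadd that by blast
    ultimately have r: "i mod int p \<in> I" by simp
    have r0: "0 \<le> i mod int p" "i mod int p < int p" using pI by auto
    have "i mod int p = 0"
    proof (rule ccontr)
      assume "i mod int p \<noteq> 0"
      then have "p \<le> nat (i mod int p)" using pmin r r0 by auto
      then show False using r0 by linarith
    qed
    then show ?thesis by auto
  qed
  have I1: "1 \<notin> I" using hM by (simp add: I_def)
  have "prime p"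
    unfolding prime_nat_iff
  proof (intro conjI allI impI)
    have "p \<noteq> 1" using pI I1 by auto
    then show "1 < p" using pI by linarith
    fix d assume d: "d dvd p"
    show "d = 1 \<or> d = p"
    proof (rule ccontr)
      assume nd: "\<not> (d = 1 \<or> d = p)"
      have "d \<noteq> 0" using d pI by auto
      then have "d > 0" by simp
      moreover have "d \<le> p" using d pI by (simp add: dvd_imp_le)
      ultimately have "int d \<notin> I"
      proof -
        assume d0: "d > 0" and dp: "d \<le> p"
        show "int d \<notin> I"
        proof
          assume "int d \<in> I"
          then have "p \<le> d" using pmin d0 by blast
          then show False using dp nd by simp
        qed
      qed
      then obtain i where "1 - int d * i \<in> I" using Ncase by blast
      then have "int p dvd 1 - int d * i" using Idvd by blast
      moreover have "int d dvd int p" using d by simp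
      ultimately have dd: "int d dvd 1 - int d * i" using dvd_trans by blast
      have "int d dvd 1" using dvd_add[OF dd dvd_triv_left[of "int d" i]] by simp
      then show False using nd by simp
    qed
  qed
  have Hrep: "\<exists>i. x - zmul i h \<in> M" if "x \<in> H" for x
  proof -
    have "N 1 \<noteq> M" using kN[of 1] hM by auto
    then have "x \<in> N 1" using key[OF sgN MN NH] that by blast
    then obtain m i where "x = m + zmul (1*i) h" "m \<in> M" by (auto simp: N_def)
    then show ?thesis by (auto intro!: exI[of _ i])
  qed
  define \<phi> where "\<phi> x = nat ((SOME i. x - zmul i h \<in> M) mod int p)" for x
  have wd: "\<phi> x = nat (i mod int p)" if "x - zmul i h \<in> M" for x i
  proof -
    define j where "j = (SOME i. x - zmul i h \<in> M)"
    have j: "x - zmul j h \<in> M" unfolding j_def using that by (rule someI)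
    have "zmul (i - j) h = (x - zmul j h) - (x - zmul i h)"
      using zmul_add[of i "-j" h] by (simp add: zmul_neg algebra_simps)
    then have "i - j \<in> I" using sg_diff[OF sgM j that] by (simp add: I_def)
    then have "int p dvd i - j" using Idvd by blast
    then have "i mod int p = j mod int p" by (simp add: mod_eq_dvd_iff)
    then show ?thesis by (simp add: \<phi>_def j_def)
  qed
  show ?thesis
  proof (intro exI conjI ballI allI impI)
    show "prime p" by fact
    show "\<phi> 0 = 0" using wd[of 0 0] sgM by (simp add: sg_def)
    fix x assume xH: "x \<in> H"
    then obtain i where i: "x - zmul i h \<in> M" using Hrep by blast
    show "\<phi> x < p" using wd[OF i] pI by (simp add: nat_less_iff)
    fix y assume yH: "y \<in> H"
    then obtain j where j: "y - zmul j h \<in> M" using Hrep by blast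
    have e: "(x + y) - zmul (i + j) h = (x - zmul i h) + (y - zmul j h)" by (simp add: zmul_add algebra_simps)
    have "(x - zmul i h) + (y - zmul j h) \<in> M" using Madd i j by blast
    then have "(x + y) - zmul (i + j) h \<in> M" unfolding e .
    then have "\<phi> (x + y) = nat ((i + j) mod int p)" by (rule wd)
    also have "\<dots> = nat ((i mod int p + j mod int p) mod int p)" by (simp add: mod_add_eq)
    also have "\<dots> = (nat (i mod int p) + nat (j mod int p)) mod p"
      using pI by (simp add: nat_mod_distrib nat_add_distrib)
    finally show "\<phi> (x + y) = (\<phi> x + \<phi> y) mod p" using wd[OF i] wd[OF j] by simp
  next
    fix j assume "j < p"
    have "zmul (int j) h - zmul (int j) h \<in> M" using sgM by (simp add: sg_def)
    then have "\<phi> (zmul (int j) h) = nat (int j mod int p)" by (rule wd)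
    moreover have "int j mod int p = int j" using \<open>j < p\<close> by simp
    ultimately have "\<phi> (zmul (int j) h) = j" by simp
    moreover have "zmul (int j) h \<in> H" using sgH hH by (rule sg_zmul)
    ultimately show "\<exists>x\<in>H. \<phi> x = j" by blast
  qed
qed



lemma modeq_aux:
  fixes A B C D k p :: nat
  assumes "(A + B) mod p = (C + D) mod p"
  shows "(A + (B + k) mod p) mod p = (C + (D + k) mod p) mod p"
proof -
  have "(A + (B + k) mod p) mod p = ((A + B) mod p + k) mod p"
    by (simp add: mod_add_right_eq mod_add_left_eq add.assoc)
  also have "\<dots> = ((C + D) mod p + k) mod p" using assms by simp
  also have "\<dots> = (C + (D + k) mod p) mod p"
    by (simp add: mod_add_right_eq mod_add_left_eq add.assoc)
  finally show ?thesis .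
qed

lemma transfer_nat:
  fixes E :: "'e set" and Q :: "'q set"
  assumes fin: "finite E" and cov: "quandle_cover E opE Q op \<pi>" and con: "quandle_connected E opE"
  shows "\<exists>(E'::nat set) opE' (\<pi>'::nat \<Rightarrow> 'q). quandle_cover E' opE' Q op \<pi>' \<and>
           quandle_connected E' opE' \<and> finite E' \<and> card E' = card E"
proof -
  obtain f where f: "bij_betw f E {0..<card E}" using ex_bij_betw_finite_nat[OF fin] by blast
  define E' where "E' = {0..<card E}"
  define g where "g = inv_into E f"
  have g: "bij_betw g E' E" unfolding g_def E'_def using f by (rule bij_betw_inv_into)
  have gf: "g (f x) = x" if "x \<in> E" for x
    unfolding g_def using f that by (meson bij_betw_inv_into_left)
  have fg: "f (g n) = n" if "n \<in> E'" for n
    unfolding g_def using f that unfolding E'_def by (meson bij_betw_inv_into_right)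
  have gE: "g n \<in> E" if "n \<in> E'" for n using g that bij_betwE by blast
  have fE: "f x \<in> E'" if "x \<in> E" for x using f that unfolding E'_def by (meson bij_betwE)
  have qE: "quandle E opE" using cov by (simp add: quandle_cover_def)
  have cimg: "\<pi> ` E = Q" using cov unfolding quandle_cover_def by blast
  have chom: "\<pi> (opE u v) = op (\<pi> u) (\<pi> v)" if "u \<in> E" "v \<in> E" for u v
    using cov that unfolding quandle_cover_def by blast
  have cfib: "opE u w = opE v w" if "u \<in> E" "v \<in> E" "w \<in> E" "\<pi> u = \<pi> v" for u v w
    using cov that unfolding quandle_cover_def by blast
  have qbij: "bij_betw (opE x) E E" if "x \<in> E" for x using qE that unfolding quandle_def by blast
  have qdist: "opE x (opE y z) = opE (opE x y) (opE x z)" if "x \<in> E" "y \<in> E" "z \<in> E" for x y z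
    using qE that unfolding quandle_def by blast
  have qidem: "opE x x = x" if "x \<in> E" for x using qE that unfolding quandle_def by blast
  have opE_in: "opE x y \<in> E" if "x \<in> E" "y \<in> E" for x y
    using qE that unfolding quandle_def by (meson bij_betwE)
  define opE' where "opE' m n = f (opE (g m) (g n))" for m n
  define \<pi>' where "\<pi>' n = \<pi> (g n)" for n
  have "quandle E' opE'"
    unfolding quandle_def
  proof (intro conjI ballI)
    fix m assume m: "m \<in> E'"
    have "bij_betw (opE (g m)) E E" using qbij gE[OF m] by blast
    then have b1: "bij_betw (opE (g m) \<circ> g) E' E" using bij_betw_trans[OF g] by blast
    have f': "bij_betw f E E'" using f unfolding E'_def .
    have bb: "bij_betw (f \<circ> (opE (g m) \<circ> g)) E' E'" using bij_betw_trans[OF b1 f'] .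
    have eqf: "opE' m = f \<circ> (opE (g m) \<circ> g)" by (simp add: opE'_def fun_eq_iff)
    show "bij_betw (opE' m) E' E'" unfolding eqf by (rule bb)
  next
    fix m n k assume m: "m \<in> E'" and n: "n \<in> E'" and k: "k \<in> E'"
    show "opE' m (opE' n k) = opE' (opE' m n) (opE' m k)"
    proof -
      have e1: "g (f (opE (g n) (g k))) = opE (g n) (g k)" using gf opE_in gE n k by blast
      have e2: "g (f (opE (g m) (g n))) = opE (g m) (g n)" using gf opE_in gE n m by blast
      have e3: "g (f (opE (g m) (g k))) = opE (g m) (g k)" using gf opE_in gE m k by blast
      show ?thesis unfolding opE'_def e1 e2 e3 using qdist[OF gE[OF m] gE[OF n] gE[OF k]] by simp
    qed
  next
    fix m assume m: "m \<in> E'"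
    show "opE' m m = m" unfolding opE'_def using gE[OF m] fg[OF m] by (simp add: qidem)
  qed
  moreover have "quandle_cover E' opE' Q op \<pi>'"
    unfolding quandle_cover_def
  proof (intro conjI ballI impI)
    show "quandle E' opE'" by fact
    have "g ` E' = E" using g by (simp add: bij_betw_imp_surj_on)
    then show "\<pi>' ` E' = Q" using cimg unfolding \<pi>'_def by (metis image_image)
  next
    fix u v assume u: "u \<in> E'" and v: "v \<in> E'"
    have e: "g (f (opE (g u) (g v))) = opE (g u) (g v)" using gf opE_in gE u v by blast
    show "\<pi>' (opE' u v) = op (\<pi>' u) (\<pi>' v)"
      unfolding \<pi>'_def opE'_def e by (rule chom[OF gE[OF u] gE[OF v]])
  next
    fix u v w assume u: "u \<in> E'" and v: "v \<in> E'" and uv: "\<pi>' u = \<pi>' v" and w: "w \<in> E'"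
    have "opE (g u) (g w) = opE (g v) (g w)"
      by (rule cfib[OF gE[OF u] gE[OF v] gE[OF w] uv[unfolded \<pi>'_def]])
    then show "opE' u w = opE' v w" by (simp add: opE'_def)
  qed
  moreover have "quandle_connected E' opE'"
  proof -
    define R where "R = {(y, opE x y) | x y. x \<in> E \<and> y \<in> E}"
    define R' where "R' = {(y, opE' x y) | x y. x \<in> E' \<and> y \<in> E'}"
    have stp: "(f u, f v) \<in> R' \<union> R'\<inverse>" if "(u, v) \<in> R \<union> R\<inverse>" for u v
      using that
    proof
      assume "(u, v) \<in> R"
      then obtain x where x: "x \<in> E" "u \<in> E" "v = opE x u" unfolding R_def by blast
      then have "f v = opE' (f x) (f u)" by (simp add: opE'_def gf)
      then have "(f u, f v) \<in> R'" unfolding R'_def using fE x by blast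
      then show ?thesis by blast
    next
      assume "(u, v) \<in> R\<inverse>"
      then obtain x where x: "x \<in> E" "v \<in> E" "u = opE x v" unfolding R_def by blast
      then have "f u = opE' (f x) (f v)" by (simp add: opE'_def gf)
      then have "(f v, f u) \<in> R'" unfolding R'_def using fE x by blast
      then show ?thesis by blast
    qed
    have path: "(f u, f v) \<in> (R' \<union> R'\<inverse>)\<^sup>*" if "(u, v) \<in> (R \<union> R\<inverse>)\<^sup>*" for u v
      using that
    proof (induction rule: rtrancl_induct)
      case base then show ?case by simp
    next
      case (step y z) then show ?case using stp[OF step(2)] by (meson rtrancl.rtrancl_into_rtrancl)
    qed
    show ?thesis unfolding quandle_connected_def Let_def
    proof (intro ballI)
      fix m n assume m: "m \<in> E'" and n: "n \<in> E'"
      have "(g m, g n) \<in> (R \<union> R\<inverse>)\<^sup>*" using con gE[OF m] gE[OF n] unfolding quandle_connected_def Let_def R_def by blast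
      then have "(f (g m), f (g n)) \<in> (R' \<union> R'\<inverse>)\<^sup>*" by (rule path)
      then show "(m, n) \<in> ({(y, opE' x y) | x y. x \<in> E' \<and> y \<in> E'} \<union> {(y, opE' x y) | x y. x \<in> E' \<and> y \<in> E'}\<inverse>)\<^sup>*"
        using fg[OF m] fg[OF n] unfolding R'_def by simp
    qed
  qed
  moreover have "finite E'" "card E' = card E" by (simp_all add: E'_def)
  ultimately show ?thesis by blast
qed



lemma mod_cancel_aux:
  fixes c j j' p :: nat
  assumes e: "(c + j) mod p = (c + j') mod p" and j: "j < p" and j': "j' < p"
  shows "j = j'"
proof (rule ccontr)
  assume ne: "j \<noteq> j'"
  have "int (c + j) mod int p = int (c + j') mod int p" using e by (metis of_nat_mod)
  then have "int p dvd int (c + j) - int (c + j')" by (simp add: mod_eq_dvd_iff)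
  then have dv: "int p dvd int j - int j'" by simp
  have nz: "int j - int j' \<noteq> 0" using ne by simp
  have "\<bar>int p\<bar> \<le> \<bar>int j - int j'\<bar>" by (rule dvd_imp_le_int[OF nz dv])
  then show False using j j' by linarith
qed

locale qc =
  fixes Q :: "'q set" and op :: "'q \<Rightarrow> 'q \<Rightarrow> 'q" and \<theta> :: "'q \<Rightarrow> 'q \<Rightarrow> 'a::ab_group_add" and q0 :: 'q
  assumes fin: "finite Q" and qu: "quandle Q op" and conn: "quandle_connected Q op"
    and coc: "quandle_cocycle Q op \<theta>" and q0: "q0 \<in> Q"
begin

lemma op_in: "x \<in> Q \<Longrightarrow> y \<in> Q \<Longrightarrow> op x y \<in> Q"
  using qu unfolding quandle_def by (meson bij_betwE)

lemma q_bij: "x \<in> Q \<Longrightarrow> bij_betw (op x) Q Q"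
  using qu unfolding quandle_def by blast
lemma q_idem: "x \<in> Q \<Longrightarrow> op x x = x"
  using qu unfolding quandle_def by blast

definition R :: "(('q \<times> 'a) \<times> ('q \<times> 'a)) set" where
  "R = {((y, b), (op x y, \<theta> x y + b)) | x y b. x \<in> Q \<and> y \<in> Q}"

definition Rs where "Rs = (R \<union> R\<inverse>)\<^sup>*"

lemma Rs_sym: "(u, v) \<in> Rs \<Longrightarrow> (v, u) \<in> Rs"
proof -
  assume "(u, v) \<in> Rs"
  then have "(v, u) \<in> ((R \<union> R\<inverse>)\<inverse>)\<^sup>*" unfolding Rs_def by (simp add: rtrancl_converseI)
  moreover have "(R \<union> R\<inverse>)\<inverse> = R \<union> R\<inverse>" by (simp add: converse_Un Un_commute)
  ultimately show ?thesis unfolding Rs_def by simp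
qed

lemma Rs_trans: "(u, v) \<in> Rs \<Longrightarrow> (v, w) \<in> Rs \<Longrightarrow> (u, w) \<in> Rs"
  unfolding Rs_def by (rule rtrancl_trans)

lemma R_step: "x \<in> Q \<Longrightarrow> y \<in> Q \<Longrightarrow> ((y, b), (op x y, \<theta> x y + b)) \<in> Rs"
  unfolding Rs_def R_def by blast

lemma Rs_shift: "(u, v) \<in> Rs \<Longrightarrow> ((fst u, snd u + d), (fst v, snd v + d)) \<in> Rs"
  unfolding Rs_def
proof (induction rule: rtrancl_induct)
  case base then show ?case by simp
next
  case (step v w)
  have "((fst v, snd v + d), (fst w, snd w + d)) \<in> R \<union> R\<inverse>"
    using step(2)
  proof
    assume "(v, w) \<in> R"
    then obtain x y b where "v = (y, b)" "w = (op x y, \<theta> x y + b)" "x \<in> Q" "y \<in> Q" unfolding R_def by blast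
    then show ?thesis unfolding R_def by (auto simp: add.assoc)
  next
    assume "(v, w) \<in> R\<inverse>"
    then obtain x y b where "w = (y, b)" "v = (op x y, \<theta> x y + b)" "x \<in> Q" "y \<in> Q" unfolding R_def by blast
    then show ?thesis unfolding R_def by (auto simp: add.assoc)
  qed
  then show ?case using step(3) by (meson rtrancl.rtrancl_into_rtrancl)
qed

lemma Rs_Q: "(u, v) \<in> Rs \<Longrightarrow> fst u \<in> Q \<Longrightarrow> fst v \<in> Q"
  unfolding Rs_def
proof (induction rule: rtrancl_induct)
  case base then show ?case by simp
next
  case (step v w)
  then show ?case unfolding R_def using op_in by auto
qed

lemma lift: "y \<in> Q \<Longrightarrow> \<exists>b. ((q0, 0), (y, b)) \<in> Rs"
proof -
  assume y: "y \<in> Q"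
  define RQ where "RQ = {(y, op x y) | x y. x \<in> Q \<and> y \<in> Q}"
  have "(q0, y) \<in> (RQ \<union> RQ\<inverse>)\<^sup>*" using conn q0 y unfolding quandle_connected_def Let_def RQ_def by blast
  then show ?thesis
  proof (induction rule: rtrancl_induct)
    case base then show ?case by (auto intro: exI[of _ 0] simp: Rs_def)
  next
    case (step z z')
    then obtain b where b: "((q0, 0), (z, b)) \<in> Rs" by blast
    from step(2) show ?case
    proof
      assume "(z, z') \<in> RQ"
      then obtain x where x: "x \<in> Q" "z \<in> Q" "z' = op x z" unfolding RQ_def by blast
      then show ?thesis using Rs_trans[OF b R_step[OF x(1,2), of b]] by blast
    next
      assume "(z, z') \<in> RQ\<inverse>"
      then obtain x where x: "x \<in> Q" "z' \<in> Q" "z = op x z'" unfolding RQ_def by blast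
      have "((z', b - \<theta> x z'), (z, b)) \<in> Rs" using R_step[OF x(1,2), of "b - \<theta> x z'"] x(3) by simp
      then show ?thesis using Rs_trans[OF b Rs_sym] by blast
    qed
  qed
qed

definition a :: "'q \<Rightarrow> 'a" where
  "a y = (if y = q0 then 0 else SOME b. ((q0, 0), (y, b)) \<in> Rs)"

lemma a_reach: "y \<in> Q \<Longrightarrow> ((q0, 0), (y, a y)) \<in> Rs"
proof (cases "y = q0")
  case True then show ?thesis by (simp add: a_def Rs_def)
next
  case False
  assume "y \<in> Q"
  then show ?thesis using False lift[of y] unfolding a_def by (auto intro: someI_ex)
qed

definition H :: "'a set" where "H = {c. ((q0, 0), (q0, c)) \<in> Rs}"

lemma Hinv: "((q0, 0), (y, b)) \<in> Rs \<Longrightarrow> y \<in> Q \<and> b - a y \<in> H"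
proof -
  assume r: "((q0, 0), (y, b)) \<in> Rs"
  have y: "y \<in> Q" using Rs_Q[OF r] q0 by simp
  have "((y, a y), (q0, 0)) \<in> Rs" using a_reach[OF y] by (rule Rs_sym)
  from Rs_shift[OF this, of "b - a y"] have "((y, b), (q0, b - a y)) \<in> Rs" by simp
  then show ?thesis using y r Rs_trans unfolding H_def by blast
qed

lemma sgH: "sg H"
  unfolding sg_def
proof (intro conjI ballI)
  show "0 \<in> H" by (simp add: H_def Rs_def)
next
  fix c d assume c: "c \<in> H" and d: "d \<in> H"
  from Rs_shift[of "(q0,0)" "(q0,d)" c] d have "((q0, c), (q0, d + c)) \<in> Rs" by (simp add: H_def)
  then show "c + d \<in> H" using c Rs_trans unfolding H_def by (simp add: add.commute)
next
  fix c assume c: "c \<in> H"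
  from Rs_shift[of "(q0,0)" "(q0,c)" "-c"] c have "((q0, -c), (q0, 0)) \<in> Rs" by (simp add: H_def)
  then have "((q0, 0), (q0, -c)) \<in> Rs" by (rule Rs_sym)
  then show "- c \<in> H" unfolding H_def by simp
qed

definition th :: "'q \<Rightarrow> 'q \<Rightarrow> 'a" where "th x y = \<theta> x y + a y - a (op x y)"

definition T where "T = (\<lambda>(x, y). th x y) ` (Q \<times> Q)"

lemma finT: "finite T" unfolding T_def using fin by simp

lemma thH: "x \<in> Q \<Longrightarrow> y \<in> Q \<Longrightarrow> th x y \<in> H"
proof -
  assume x: "x \<in> Q" and y: "y \<in> Q"
  have "((q0, 0), (op x y, \<theta> x y + a y)) \<in> Rs" using Rs_trans[OF a_reach[OF y] R_step[OF x y]] .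
  then show ?thesis using Hinv unfolding th_def by (simp add: diff_add_eq)
qed

lemma TH: "T \<subseteq> H" unfolding T_def using thH by auto

lemma genH: "sg S \<Longrightarrow> T \<subseteq> S \<Longrightarrow> H \<subseteq> S"
proof -
  assume S: "sg S" and TS: "T \<subseteq> S"
  have thS: "th x y \<in> S" if "x \<in> Q" "y \<in> Q" for x y using TS that unfolding T_def by auto
  have inv: "snd v - a (fst v) \<in> S \<and> fst v \<in> Q" if "((q0, 0), v) \<in> Rs" for v
    using that unfolding Rs_def
  proof (induction rule: rtrancl_induct)
    case base then show ?case using q0 S by (simp add: a_def sg_def)
  next
    case (step v w)
    from step(2) show ?case
    proof
      assume "(v, w) \<in> R"
      then obtain x y b where e: "v = (y, b)" "w = (op x y, \<theta> x y + b)" "x \<in> Q" "y \<in> Q" unfolding R_def by blast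
      have eq: "snd w - a (fst w) = th x y + (snd v - a (fst v))" using e by (simp add: th_def algebra_simps)
      have "th x y + (snd v - a (fst v)) \<in> S" using S thS[OF e(3,4)] step(3) unfolding sg_def by blast
      then have "snd w - a (fst w) \<in> S" unfolding eq .
      moreover have "fst w \<in> Q" using e op_in by simp
      ultimately show ?thesis by blast
    next
      assume "(v, w) \<in> R\<inverse>"
      then obtain x y b where e: "w = (y, b)" "v = (op x y, \<theta> x y + b)" "x \<in> Q" "y \<in> Q" unfolding R_def by blast
      have eq: "snd w - a (fst w) = (snd v - a (fst v)) - th x y" using e by (simp add: th_def algebra_simps)
      have "(snd v - a (fst v)) - th x y \<in> S" using sg_diff[OF S _ thS[OF e(3,4)]] step(3) by blast
      then have "snd w - a (fst w) \<in> S" unfolding eq .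
      moreover have "fst w \<in> Q" using e by simp
      ultimately show ?thesis by blast
    qed
  qed
  show "H \<subseteq> S"
  proof
    fix c assume "c \<in> H"
    then have "((q0, 0), (q0, c)) \<in> Rs" by (simp add: H_def)
    then show "c \<in> S" using inv by (fastforce simp: a_def)
  qed
qed

lemma H_triv: "H = {0} \<Longrightarrow> cohomologous_trivial Q op \<theta>"
proof -
  assume H0: "H = {0}"
  have eq: "\<theta> x y = a (op x y) - a y" if "x \<in> Q" "y \<in> Q" for x y
    using thH[OF that] H0 by (simp add: th_def algebra_simps)
  define \<gamma> where "\<gamma> y = (\<lambda>b. a y + b)" for y
  have inv: "inv (\<gamma> y) = (\<lambda>b. b - a y)" for y
    unfolding \<gamma>_def by (rule inv_equality) (simp_all add: algebra_simps)
  have bij: "bij (\<gamma> y)" for y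
    unfolding \<gamma>_def by (rule bij_betw_byWitness[where f'="\<lambda>b. b - a y"]) (auto simp: algebra_simps)
  show ?thesis unfolding cohomologous_trivial_def
  proof (intro exI[of _ \<gamma>] conjI ballI)
    fix x show "bij (\<gamma> x)" by (rule bij)
  next
    fix x y assume xy: "x \<in> Q" "y \<in> Q"
    show "(\<lambda>b. \<theta> x y + b) = \<gamma> (op x y) \<circ> inv (\<gamma> y)"
      unfolding inv using eq[OF xy] by (simp add: \<gamma>_def fun_eq_iff algebra_simps)
  qed
qed

lemma th_cocycle:
  assumes "x \<in> Q" "y \<in> Q" "z \<in> Q"
  shows "th x (op y z) + th y z = th (op x y) (op x z) + th x z"
proof -
  have c: "\<theta> (op x y) (op x z) + \<theta> x z = \<theta> x (op y z) + \<theta> y z"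
    using coc assms unfolding quandle_cocycle_def by blast
  have d: "op x (op y z) = op (op x y) (op x z)" using qu assms unfolding quandle_def by blast
  show ?thesis unfolding th_def using c d by (simp add: algebra_simps)
qed

lemma th_idem: "x \<in> Q \<Longrightarrow> th x x = 0"
proof -
  assume x: "x \<in> Q"
  have "\<theta> x x = 0" using coc x unfolding quandle_cocycle_def by blast
  then show ?thesis unfolding th_def using q_idem[OF x] by simp
qed

end

locale qc2 = qc Q op \<theta> q0 for Q :: "'q set" and op and \<theta> :: "'q \<Rightarrow> 'q \<Rightarrow> 'a::ab_group_add" and q0 +
  fixes p :: nat and \<phi> :: "'a \<Rightarrow> nat"
  assumes pp: "prime p" and \<phi>0: "\<phi> 0 = 0" and \<phi>lt: "\<forall>x\<in>H. \<phi> x < p"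
    and \<phi>add: "\<forall>x\<in>H. \<forall>y\<in>H. \<phi> (x + y) = (\<phi> x + \<phi> y) mod p"
    and \<phi>surj: "\<forall>j<p. \<exists>x\<in>H. \<phi> x = j"
begin

definition E' :: "('q \<times> nat) set" where "E' = Q \<times> {0..<p}"
definition opE' :: "'q \<times> nat \<Rightarrow> 'q \<times> nat \<Rightarrow> 'q \<times> nat" where
  "opE' u v = (op (fst u) (fst v), (\<phi> (th (fst u) (fst v)) + snd v) mod p)"

lemma p0: "p > 0" using pp by (simp add: prime_gt_0_nat)

lemma finE': "finite E'" unfolding E'_def using fin by simp

lemma cardE': "card E' = p * card Q" unfolding E'_def by (simp add: card_cartesian_product)

lemma opE'_in: "u \<in> E' \<Longrightarrow> v \<in> E' \<Longrightarrow> opE' u v \<in> E'"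
  unfolding E'_def opE'_def using op_in p0 by auto

lemma quandleE': "quandle E' opE'"
  unfolding quandle_def
proof (intro conjI ballI)
  fix u assume u: "u \<in> E'"
  have inj: "inj_on (opE' u) E'"
  proof (rule inj_onI)
    fix v w assume v: "v \<in> E'" and w: "w \<in> E'" and e: "opE' u v = opE' u w"
    have "fst u \<in> Q" using u unfolding E'_def by auto
    then have "inj_on (op (fst u)) Q" using q_bij bij_betw_imp_inj_on by blast
    moreover have "op (fst u) (fst v) = op (fst u) (fst w)" using arg_cong[OF e, of fst] by (simp add: opE'_def)
    moreover have "fst v \<in> Q" "fst w \<in> Q" using v w unfolding E'_def by auto
    ultimately have f: "fst v = fst w" by (meson inj_onD)
    have "(\<phi> (th (fst u) (fst v)) + snd v) mod p = (\<phi> (th (fst u) (fst w)) + snd w) mod p"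
      using arg_cong[OF e, of snd] by (simp add: opE'_def)
    then have "(\<phi> (th (fst u) (fst v)) + snd v) mod p = (\<phi> (th (fst u) (fst v)) + snd w) mod p"
      unfolding f .
    moreover have "snd v < p" "snd w < p" using v w unfolding E'_def by auto
    ultimately have "snd v = snd w" by (rule mod_cancel_aux)
    with f show "v = w" by (simp add: prod_eq_iff)
  qed
  moreover have "opE' u ` E' \<subseteq> E'" using opE'_in u by blast
  ultimately have "opE' u ` E' = E'" using finE' endo_inj_surj by blast
  then show "bij_betw (opE' u) E' E'" using inj by (simp add: bij_betw_def)
next
  fix u v w assume u: "u \<in> E'" and v: "v \<in> E'" and w: "w \<in> E'"
  obtain x i where ux: "u = (x, i)" by (cases u)
  obtain y j where vy: "v = (y, j)" by (cases v)
  obtain z k where wz: "w = (z, k)" by (cases w)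
  have xyz: "x \<in> Q" "y \<in> Q" "z \<in> Q" using u v w ux vy wz unfolding E'_def by auto
  have d: "op x (op y z) = op (op x y) (op x z)" using qu xyz unfolding quandle_def by blast
  have h1: "th x (op y z) \<in> H" "th y z \<in> H" "th (op x y) (op x z) \<in> H" "th x z \<in> H"
    using thH op_in xyz by auto
  have "(\<phi> (th x (op y z)) + \<phi> (th y z)) mod p = \<phi> (th x (op y z) + th y z)"
    using \<phi>add h1 by simp
  also have "\<dots> = \<phi> (th (op x y) (op x z) + th x z)" using th_cocycle xyz by simp
  also have "\<dots> = (\<phi> (th (op x y) (op x z)) + \<phi> (th x z)) mod p"
    using \<phi>add h1 by simp
  finally have m: "(\<phi> (th x (op y z)) + \<phi> (th y z)) mod p = (\<phi> (th (op x y) (op x z)) + \<phi> (th x z)) mod p" .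
  show "opE' u (opE' v w) = opE' (opE' u v) (opE' u w)"
    unfolding ux vy wz opE'_def using d modeq_aux[OF m, of k] by simp
next
  fix u assume u: "u \<in> E'"
  obtain x i where ux: "u = (x, i)" by (cases u)
  have "x \<in> Q" "i < p" using u ux unfolding E'_def by auto
  then show "opE' u u = u" unfolding ux opE'_def using th_idem \<phi>0 q_idem by simp
qed

lemma coverE': "quandle_cover E' opE' Q op fst"
  unfolding quandle_cover_def
proof (intro conjI ballI impI)
  show "quandle E' opE'" by (rule quandleE')
  show "fst ` E' = Q" unfolding E'_def using p0 by auto
next
  fix u v :: "'q \<times> nat"
  show "fst (opE' u v) = op (fst u) (fst v)" by (simp add: opE'_def)
next
  fix u v w :: "'q \<times> nat" assume "fst u = fst v"
  then show "opE' u w = opE' v w" by (simp add: opE'_def)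
qed

definition Phi :: "'q \<times> 'a \<Rightarrow> 'q \<times> nat" where "Phi u = (fst u, \<phi> (snd u - a (fst u)))"

lemma connE': "quandle_connected E' opE'"
proof -
  define R' where "R' = {(y, opE' x y) | x y. x \<in> E' \<and> y \<in> E'}"
  have PhiE: "Phi v \<in> E'" if "((q0, 0), v) \<in> Rs" for v
    using Hinv[of "fst v" "snd v"] that \<phi>lt unfolding Phi_def E'_def by auto
  have stepR: "Phi w = opE' (x, 0) (Phi v)" if "((q0, 0), v) \<in> Rs" "v = (y, b)" "w = (op x y, \<theta> x y + b)" "x \<in> Q" "y \<in> Q" for v w x y b
  proof -
    have bH: "b - a y \<in> H" using Hinv that by auto
    have eq: "\<theta> x y + b - a (op x y) = th x y + (b - a y)" by (simp add: th_def algebra_simps)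
    have "\<phi> (th x y + (b - a y)) = (\<phi> (th x y) + \<phi> (b - a y)) mod p"
      using \<phi>add thH[OF that(4,5)] bH by blast
    then have "\<phi> (\<theta> x y + b - a (op x y)) = (\<phi> (th x y) + \<phi> (b - a y)) mod p"
      unfolding eq .
    then show ?thesis using that by (simp add: Phi_def opE'_def)
  qed
  have path: "((q0, 0), Phi v) \<in> (R' \<union> R'\<inverse>)\<^sup>*" if "((q0, 0), v) \<in> Rs" for v
    using that unfolding Rs_def
  proof (induction rule: rtrancl_induct)
    case base then show ?case by (simp add: Phi_def a_def \<phi>0)
  next
    case (step v w)
    have rv: "((q0, 0), v) \<in> Rs" using step(1) by (simp add: Rs_def)
    have rw: "((q0, 0), w) \<in> Rs" unfolding Rs_def using step(1,2) by (rule rtrancl_into_rtrancl)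
    have x0: "(x, 0) \<in> E'" if "x \<in> Q" for x using that p0 by (simp add: E'_def)
    from step(2) have "(Phi v, Phi w) \<in> R' \<union> R'\<inverse>"
    proof
      assume "(v, w) \<in> R"
      then obtain x y b where e: "v = (y, b)" "w = (op x y, \<theta> x y + b)" "x \<in> Q" "y \<in> Q" unfolding R_def by blast
      have "Phi w = opE' (x, 0) (Phi v)" by (rule stepR[OF rv e])
      then have "(Phi v, Phi w) \<in> R'" unfolding R'_def using x0[OF e(3)] PhiE[OF rv] by blast
      then show ?thesis by blast
    next
      assume "(v, w) \<in> R\<inverse>"
      then obtain x y b where e: "w = (y, b)" "v = (op x y, \<theta> x y + b)" "x \<in> Q" "y \<in> Q" unfolding R_def by blast
      have "Phi v = opE' (x, 0) (Phi w)" by (rule stepR[OF rw e])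
      then have "(Phi w, Phi v) \<in> R'" unfolding R'_def using x0[OF e(3)] PhiE[OF rw] by blast
      then show ?thesis by blast
    qed
    then show ?case using step(3) by (meson rtrancl.rtrancl_into_rtrancl)
  qed
  have reach: "((q0, 0), u) \<in> (R' \<union> R'\<inverse>)\<^sup>*" if uE: "u \<in> E'" for u
  proof -
    obtain q j where u: "u = (q, j)" "q \<in> Q" "j < p" using uE unfolding E'_def by auto
    obtain x where x: "x \<in> H" "\<phi> x = j" using \<phi>surj u by blast
    have "((q0, 0), (q0, x)) \<in> Rs" using x by (simp add: H_def)
    moreover have "((q0, x), (q, a q + x)) \<in> Rs"
      using Rs_shift[OF a_reach[OF u(2)], of x] by simp
    ultimately have "((q0, 0), (q, a q + x)) \<in> Rs" by (rule Rs_trans)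
    from path[OF this] show ?thesis using x u by (simp add: Phi_def)
  qed
  have sym: "(u, v) \<in> (R' \<union> R'\<inverse>)\<^sup>*" if "(v, u) \<in> (R' \<union> R'\<inverse>)\<^sup>*" for u v
  proof -
    have "(u, v) \<in> ((R' \<union> R'\<inverse>)\<inverse>)\<^sup>*" using that by (simp add: rtrancl_converseI)
    moreover have "(R' \<union> R'\<inverse>)\<inverse> = R' \<union> R'\<inverse>" by (simp add: converse_Un Un_commute)
    ultimately show ?thesis by simp
  qed
  show ?thesis unfolding quandle_connected_def Let_def R'_def[symmetric]
  proof (intro ballI)
    fix u v assume "u \<in> E'" "v \<in> E'"
    then show "(u, v) \<in> (R' \<union> R'\<inverse>)\<^sup>*" using reach sym rtrancl_trans by metis
  qed
qed

end


theorem proposition2p11: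
  fixes Q :: "'q set" and op :: "'q \<Rightarrow> 'q \<Rightarrow> 'q"
    and \<theta> :: "'q \<Rightarrow> 'q \<Rightarrow> 'a::ab_group_add"
  assumes "finite Q"
    and "quandle Q op"
    and "quandle_connected Q op"
    and "quandle_cocycle Q op \<theta>"
    and "\<not> cohomologous_trivial Q op \<theta>"
  shows "\<exists>p::nat. prime p \<and>
           (\<exists>(E :: nat set) opE (\<pi> :: nat \<Rightarrow> 'q).
              quandle_cover E opE Q op \<pi> \<and> quandle_connected E opE \<and>
              finite E \<and> card E = p * card Q)"
proof -
  have "Q \<noteq> {}"
  proof
    assume "Q = {}"
    then have "cohomologous_trivial Q op \<theta>"
      unfolding cohomologous_trivial_def by (intro exI[of _ "\<lambda>_. id"]) simp
    with assms(5) show False by simp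
  qed
  then obtain q0 where q0: "q0 \<in> Q" by blast
  interpret qc Q op \<theta> q0 using assms q0 by unfold_locales
  have "H \<noteq> {0}" using H_triv assms(5) by blast
  then obtain p and \<phi> :: "'a \<Rightarrow> nat" where pp: "prime p" and ph0: "\<phi> 0 = 0" and phlt: "\<forall>x\<in>H. \<phi> x < p"
    and phadd: "\<forall>x\<in>H. \<forall>y\<in>H. \<phi> (x + y) = (\<phi> x + \<phi> y) mod p"
    and phsurj: "\<forall>j<p. \<exists>x\<in>H. \<phi> x = j"
    using exists_Zp_quotient[OF sgH finT TH genH] by blast
  interpret qc2 Q op \<theta> q0 p \<phi>
    by unfold_locales (use pp ph0 phlt phadd phsurj in auto)
  obtain E2 :: "nat set" and opE2 and \<pi>2 :: "nat \<Rightarrow> 'q" where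
    "quandle_cover E2 opE2 Q op \<pi>2" "quandle_connected E2 opE2" "finite E2" "card E2 = card E'"
    using transfer_nat[OF finE' coverE' connE'] by blast
  then show ?thesis using pp cardE' by metis
qed

end
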